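(* The area of the cusp triangle $T'=P_1'P_2'P_3'$ equals $\dfrac{27\sqrt3}{16}\,\dfrac{c^4}{ab}$, independent of $u$.
   Context: Let $a>b>0$ and $c>0$ with $c^2=a^2-b^2$. Let $\mathcal{E}$ be the ellipse $x^2/a^2+y^2/b^2=1$, parametrized by $P(t)=(a\cos t,b\sin t)$. Fix $u\in\mathbb{R}$ and let $M=(a\cos u,b\sin u)$. Let $\Delta_u(t)=(x_u(t),y_u(t))$, where $x_u(t)=\frac1a\big(c^2(1+\cos(t+u))\cos t-a^2\cos u\big)$ and $y_u(t)=\frac1b\big(c^2\cos t\sin(t+u)-c^2\sin t-a^2\sin u\big)$ (the negative pedal curve of $\mathcal{E}$ with respect to $M$). For $i=1,2,3$ let $t_i=-u/3-2\pi(i-1)/3$ and $P_i'=\Delta_u(t_i)$ (the cusps of $\Delta_u$). *)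

theory Defs
  imports Complex_Main
begin

text \<open>Negative pedal curve of the ellipse with respect to M = (a cos u, b sin u).\<close>
definition neg_pedal :: "real \<Rightarrow> real \<Rightarrow> real \<Rightarrow> real \<Rightarrow> real \<Rightarrow> real \<times> real" where
  "neg_pedal a b c u t =
     ((c^2 * (1 + cos (t + u)) * cos t - a^2 * cos u) / a,
      (c^2 * cos t * sin (t + u) - c^2 * sin t - a^2 * sin u) / b)"

definition cusp :: "real \<Rightarrow> real \<Rightarrow> real \<Rightarrow> real \<Rightarrow> nat \<Rightarrow> real \<times> real" where
  "cusp a b c u i = neg_pedal a b c u (- u / 3 - 2 * pi * (real i - 1) / 3)"

definition triangle_area :: "real \<times> real \<Rightarrow> real \<times> real \<Rightarrow> real \<times> real \<Rightarrow> real" where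
  "triangle_area P Q R =
     \<bar>(fst Q - fst P) * (snd R - snd P) - (fst R - fst P) * (snd Q - snd P)\<bar> / 2"

end

theory Submission
  imports Defs
begin

lemma key:
  fixes C S r :: real
  assumes "C^2 + S^2 = 1" "r^2 = 3"
  defines "c2 \<equiv> C^2 - S^2" and "s2 \<equiv> 2*S*C"
  defines "X1 \<equiv> (1 + c2) * C" and "Y1 \<equiv> C * (-s2) - S"
  and "ct2 \<equiv> -C/2 + r/2*S" and "st2 \<equiv> -S/2 - r/2*C"
  and "cu2 \<equiv> -c2/2 - s2*r/2" and "su2 \<equiv> -(-s2/2 + c2*r/2)"
  and "ct3 \<equiv> -C/2 - r/2*S" and "st3 \<equiv> -S/2 + r/2*C"
  and "cu3 \<equiv> -c2/2 + s2*r/2" and "su3 \<equiv> -(-s2/2 - c2*r/2)"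
  shows "((1+cu2)*ct2 - X1) * ((ct3*su3 - st3) - Y1) - ((1+cu3)*ct3 - X1) * ((ct2*su2 - st2) - Y1) = 27*r/8"
proof -
  have "((1+cu2)*ct2 - X1) * ((ct3*su3 - st3) - Y1) - ((1+cu3)*ct3 - X1) * ((ct2*su2 - st2) - Y1) - 27*r/8
     = ((15/8)*C^2*r + (27/8)*r + (3/4)*C^2*S^2*r + (15/8)*S^2*r + (3/8)*S^4*r + (3/8)*C^4*r) * (S^2+C^2-1)
     + ((1/4)*C^2*S^2*r + (1/4)*S^4*r + (1/8)*C^4*S^2*r + (1/4)*C^2*S^4*r + (1/8)*S^6*r) * (r^2 - 3)"
    unfolding c2_def s2_def X1_def Y1_def ct2_def st2_def cu2_def su2_def ct3_def st3_def cu3_def su3_def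
    apply (simp add: field_simps)
    by algebra
  also have "\<dots> = 0" using assms(1,2) by (simp add: add.commute)
  finally show ?thesis by simp
qed

lemma det_scale:
  fixes a b c K L :: real
  assumes "a \<noteq> 0" "b \<noteq> 0"
  shows "triangle_area ((c^2*X1 - K)/a, (c^2*Y1 - L)/b) ((c^2*X2 - K)/a, (c^2*Y2 - L)/b)
           ((c^2*X3 - K)/a, (c^2*Y3 - L)/b)
       = \<bar>c^4/(a*b) * ((X2 - X1)*(Y3 - Y1) - (X3 - X1)*(Y2 - Y1))\<bar> / 2"
proof -
  have "(c^2*X2 - K)/a - (c^2*X1 - K)/a = c^2*(X2-X1)/a"
       "(c^2*X3 - K)/a - (c^2*X1 - K)/a = c^2*(X3-X1)/a"
       "(c^2*Y2 - L)/b - (c^2*Y1 - L)/b = c^2*(Y2-Y1)/b"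
       "(c^2*Y3 - L)/b - (c^2*Y1 - L)/b = c^2*(Y3-Y1)/b"
    by (simp_all add: diff_divide_distrib algebra_simps)
  then show ?thesis unfolding triangle_area_def fst_conv snd_conv
    apply (simp only:)
    apply (rule arg_cong[where f="\<lambda>x. \<bar>x\<bar>/2"])
    using assms by (simp add: field_simps power4_eq_xxxx power2_eq_square)
qed

theorem proposition4p1:
  fixes a b c u :: real
  assumes "a > b" "b > 0" "c > 0" "c^2 = a^2 - b^2"
  shows "triangle_area (cusp a b c u 1) (cusp a b c u 2) (cusp a b c u 3)
           = 27 * sqrt 3 / 16 * c^4 / (a * b)"
proof -
  define s where "s = -u/3"
  define C where "C = cos s"
  define S where "S = sin s"
  define r where "r = sqrt 3"
  have u: "u = -3*s" unfolding s_def by simp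
  have r2: "r^2 = 3" unfolding r_def by simp
  have CS: "C^2 + S^2 = 1" unfolding C_def S_def by simp
  have c120: "cos (2*pi/3) = -1/2" and s120: "sin (2*pi/3) = r/2"
    using cos_120 sin_120 r_def by auto
  have c240: "cos (4*pi/3) = -1/2" and s240: "sin (4*pi/3) = -r/2"
  proof -
    have e: "4*pi/3 = 2*(2*pi/3)" by simp
    show "cos (4*pi/3) = -1/2" unfolding e cos_double c120 s120 using r2
      by (simp add: power_divide)
    show "sin (4*pi/3) = -r/2" unfolding e sin_double using c120 s120
      by simp
  qed
  have c2s: "cos (2*s) = C^2 - S^2" unfolding C_def S_def by (simp add: cos_double)
  have s2s: "sin (2*s) = 2*S*C" unfolding C_def S_def by (simp add: sin_double)
  have t1: "- u / 3 - 2 * pi * (real 1 - 1) / 3 = s" unfolding s_def by simp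
  have t2: "- u / 3 - 2 * pi * (real 2 - 1) / 3 = s - 2*pi/3" unfolding s_def by simp
  have t3: "- u / 3 - 2 * pi * (real 3 - 1) / 3 = s - 4*pi/3" unfolding s_def by simp
  have tu1: "s + u = -(2*s)" using u by simp
  have tu2: "s - 2*pi/3 + u = -(2*s + 2*pi/3)" using u by simp
  have tu3: "s - 4*pi/3 + u = -(2*s + 4*pi/3)" using u by simp
  have P1: "cusp a b c u 1 = ((c^2 * ((1 + (C^2 - S^2)) * C) - a^2 * cos u)/a,
                               (c^2 * (C * (-(2*S*C)) - S) - a^2 * sin u)/b)"
    unfolding cusp_def neg_pedal_def t1 tu1 cos_minus sin_minus c2s s2s C_def[symmetric] S_def[symmetric]
    by (simp add: algebra_simps)
  have P2: "cusp a b c u 2 = ((c^2 * ((1 + (-(C^2 - S^2)/2 - (2*S*C)*r/2)) * (-C/2 + r/2*S)) - a^2 * cos u)/a,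
         (c^2 * ((-C/2 + r/2*S) * (-(-(2*S*C)/2 + (C^2 - S^2)*r/2)) - (-S/2 - r/2*C)) - a^2 * sin u)/b)"
    unfolding cusp_def neg_pedal_def t2 tu2 cos_minus sin_minus cos_diff sin_diff cos_add sin_add
      c2s s2s c120 s120 C_def[symmetric] S_def[symmetric]
    by (simp add: field_simps)
  have P3: "cusp a b c u 3 = ((c^2 * ((1 + (-(C^2 - S^2)/2 + (2*S*C)*r/2)) * (-C/2 - r/2*S)) - a^2 * cos u)/a,
         (c^2 * ((-C/2 - r/2*S) * (-(-(2*S*C)/2 - (C^2 - S^2)*r/2)) - (-S/2 + r/2*C)) - a^2 * sin u)/b)"
    unfolding cusp_def neg_pedal_def t3 tu3 cos_minus sin_minus cos_diff sin_diff cos_add sin_add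
      c2s s2s c240 s240 C_def[symmetric] S_def[symmetric]
    by (simp add: field_simps)
  have ab: "a \<noteq> 0" "b \<noteq> 0" using assms by auto
  have K: "((1 + (-(C^2 - S^2)/2 - (2*S*C)*r/2)) * (-C/2 + r/2*S) - (1 + (C^2 - S^2)) * C) *
           (((-C/2 - r/2*S) * (-(-(2*S*C)/2 - (C^2 - S^2)*r/2)) - (-S/2 + r/2*C)) - (C * (-(2*S*C)) - S))
         - ((1 + (-(C^2 - S^2)/2 + (2*S*C)*r/2)) * (-C/2 - r/2*S) - (1 + (C^2 - S^2)) * C) *
           (((-C/2 + r/2*S) * (-(-(2*S*C)/2 + (C^2 - S^2)*r/2)) - (-S/2 - r/2*C)) - (C * (-(2*S*C)) - S))
         = 27*r/8"
    using key[OF CS r2] by simp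
  have rpos: "r > 0" unfolding r_def by simp
  show ?thesis
    unfolding P1 P2 P3 det_scale[OF ab] K
    using assms rpos by (simp add: r_def abs_mult)
qed

end
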